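(* Let $g:[0,1]\to[0,1]$ be such that $g|_{\mathcal{X}_n}\in\mathcal{G}_n^{(d)}$ and $g\in C^\alpha[0,1]$ with $\alpha\ge p\ge1$, where $p$ is the order of the chosen quadrature rule, and assume $E_n^{(p)}[g]\le C_p\,2^{-pn}\|g^{(p)}\|_\infty$. Fix $\delta\in(0,1)$. To achieve total integration error $|I[g]-\hat a|\le\varepsilon$ with probability at least $1-\delta$, the following resources suffice: \[ n\ge\frac1p\log_2\Bigl(\frac{2C_p\|g^{(p)}\|_\infty}{\varepsilon}\Bigr),\qquad M\ge\frac{2C_{\mathrm{est}}}{\varepsilon\sqrt\delta},\qquad\text{gate count per oracle call}=\sum_{k=0}^{d}\binom{n}{k}. \] Substituting the minimal $n^*=\bigl\lceil\frac1p\log_2(2C_p\|g^{(p)}\|_\infty/\varepsilon)\bigr\rceil$ and taking $\delta$ a fixed constant, the total gate count across all $M$ oracle calls, as a function of $\varepsilon$ alone (for fixed $d$), is \[ \mathcal{O}\Bigl(\Bigl(\frac{\log(1/\varepsilon)}{p}\Bigr)^d\cdot\frac1\varepsilon\Bigr). \]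
   Context: $I[g]=\int_0^1g(x)\,dx$. For $n\ge1$, $\mathcal{X}_n=\{i/2^n:i=0,\dots,2^n-1\}$; $Q_n^{(p)}[g]$ denotes the approximation of $I[g]$ by a quadrature rule of order $p$ on $\mathcal{X}_n$, and $E_n^{(p)}[g]=|I[g]-Q_n^{(p)}[g]|$; $C_p>0$ is a constant depending only on $p$. The angle map of $h:\mathcal{X}_n\to[0,1]$ is $\Theta_h(b)=2\arcsin\sqrt{h(x_{i(b)})}$, $b\in\{0,1\}^n$, $i(b)=\sum_kb_k2^k$; $\mathcal{G}_n^{(d)}$ is the set of $h$ whose angle map, written as a multilinear polynomial $\sum_{S\subseteq\{0,\dots,n-1\}}c_S\prod_{j\in S}b_j$, has degree $\le d$. Quantum amplitude estimation setting: an amplitude oracle built from $g|_{\mathcal{X}_n}$ encodes the amplitude $a=Q_n^{(p)}[g]$, and each oracle call uses $\sum_{k=0}^d\binom nk$ controlled-$R_Y$ gates (the monomial factorisation of the encoding operator). The maximum-likelihood amplitude estimator $\hat a$ with total oracle cost $M$ (number of Grover-iterate applications weighted by depth) is assumed to satisfy $\mathbb{E}[(\hat a-a)^2]^{1/2}\le C_{\mathrm{est}}/M$ for a constant $C_{\mathrm{est}}>0$, hence $\mathbb{P}(|\hat a-a|\le C_{\mathrm{est}}/(M\sqrt\delta))\ge1-\delta$ for every $\delta\in(0,1)$. *)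

theory Defs
  imports "HOL-Probability.Probability" "HOL-Library.Landau_Symbols"
begin

definition grid :: "nat \<Rightarrow> real set" where
  "grid n = {real i / 2 ^ n | i. i < 2 ^ n}"

definition bit_index :: "nat \<Rightarrow> (nat \<Rightarrow> bool) \<Rightarrow> nat" where
  "bit_index n b = (\<Sum>k<n. (if b k then 2 ^ k else 0))"

definition angle_map :: "nat \<Rightarrow> (real \<Rightarrow> real) \<Rightarrow> (nat \<Rightarrow> bool) \<Rightarrow> real" where
  "angle_map n h b = 2 * arcsin (sqrt (h (real (bit_index n b) / 2 ^ n)))"

text \<open>G_n^(d): functions h : X_n -> [0,1] whose angle map, written as a multilinear
  polynomial sum_{S subseteq {0..n-1}} c_S prod_{j in S} b_j, has degree at most d.\<close>
definition G_class :: "nat \<Rightarrow> nat \<Rightarrow> (real \<Rightarrow> real) set" where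
  "G_class n d = {h. (\<forall>x\<in>grid n. 0 \<le> h x \<and> h x \<le> 1) \<and>
      (\<exists>c :: nat set \<Rightarrow> real. (\<forall>S. d < card S \<longrightarrow> c S = 0) \<and>
         (\<forall>b. angle_map n h b =
                (\<Sum>S\<in>Pow {..<n}. c S * (\<Prod>j\<in>S. (if b j then 1 else 0)))))}"

definition has_derivs_on :: "nat \<Rightarrow> (real \<Rightarrow> real) \<Rightarrow> (nat \<Rightarrow> real \<Rightarrow> real) \<Rightarrow> bool" where
  "has_derivs_on k g D \<longleftrightarrow>
     (\<forall>x\<in>{0..1}. D 0 x = g x) \<and>
     (\<forall>j<k. \<forall>x\<in>{0..1}. (D j has_real_derivative D (Suc j) x) (at x within {0..1})) \<and>
     continuous_on {0..1} (D k)"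

definition C_alpha :: "real \<Rightarrow> (real \<Rightarrow> real) \<Rightarrow> bool" where
  "C_alpha \<alpha> g \<longleftrightarrow> 0 \<le> \<alpha> \<and>
     (\<exists>D. has_derivs_on (nat \<lfloor>\<alpha>\<rfloor>) g D \<and>
        (\<exists>L. \<forall>x\<in>{0..1}. \<forall>y\<in>{0..1}.
            \<bar>D (nat \<lfloor>\<alpha>\<rfloor>) x - D (nat \<lfloor>\<alpha>\<rfloor>) y\<bar> \<le> L * \<bar>x - y\<bar> powr (\<alpha> - of_int \<lfloor>\<alpha>\<rfloor>)))"

definition deriv_sup_norm :: "nat \<Rightarrow> (real \<Rightarrow> real) \<Rightarrow> real" where
  "deriv_sup_norm p g = (SOME N. \<exists>D. has_derivs_on p g D \<and> N = (SUP x\<in>{0..1}. \<bar>D p x\<bar>))"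

text \<open>Number of controlled-R_Y gates per oracle call.\<close>
definition gate_count :: "nat \<Rightarrow> nat \<Rightarrow> nat" where
  "gate_count n d = (\<Sum>k\<le>d. n choose k)"

end

theory Submission
  imports Defs
begin


lemma gate_count_bound: "real (gate_count k d) \<le> real (d+1) * (real k + 1) ^ d"
proof -
  have "real (gate_count k d) = (\<Sum>j\<le>d. real (k choose j))"
    by (simp add: gate_count_def)
  also have "\<dots> \<le> (\<Sum>j\<le>d. (real k + 1) ^ d)"
  proof (rule sum_mono)
    fix j assume j: "j \<in> {..d}"
    show "real (k choose j) \<le> (real k + 1) ^ d"
    proof (cases "j \<le> k")
      case True
      have "real (k choose j) \<le> real k ^ j"
        using binomial_le_pow[OF True] by (metis of_nat_le_iff of_nat_power)
      also have "\<dots> \<le> (real k + 1) ^ j" by (rule power_mono) auto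
      also have "\<dots> \<le> (real k + 1) ^ d" using j by (intro power_increasing) auto
      finally show ?thesis .
    next
      case False
      then show ?thesis by (simp add: binomial_eq_0)
    qed
  qed
  also have "\<dots> = real (d+1) * (real k + 1) ^ d" by simp
  finally show ?thesis .
qed

theorem mainTheorem4:
  fixes g :: "real \<Rightarrow> real" and p d :: nat and \<alpha> Cp Cest \<delta> :: real
    and Q :: "nat \<Rightarrow> real"
    and \<Omega> :: "'w measure" and ahat :: "nat \<Rightarrow> nat \<Rightarrow> 'w \<Rightarrow> real"
  assumes g_range: "\<forall>x\<in>{0..1}. 0 \<le> g x \<and> g x \<le> 1"
    and p_ge: "p \<ge> 1" and alpha_ge: "\<alpha> \<ge> real p" and g_smooth: "C_alpha \<alpha> g"
    and Cp_pos: "Cp > 0" and Cest_pos: "Cest > 0"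
    and quad_err: "\<forall>n\<ge>1. \<bar>integral {0..1} g - Q n\<bar>
                     \<le> Cp * 2 powr (- (real p * real n)) * deriv_sup_norm p g"
    and prob: "prob_space \<Omega>"
    and ahat_meas: "\<forall>n M. ahat n M \<in> borel_measurable \<Omega>"
    and estimator: "\<forall>n\<ge>1. \<forall>M>0. \<forall>\<delta>'. 0 < \<delta>' \<and> \<delta>' < 1 \<longrightarrow>
        measure \<Omega> {\<omega>\<in>space \<Omega>. \<bar>ahat n M \<omega> - Q n\<bar> \<le> Cest / (real M * sqrt \<delta>')} \<ge> 1 - \<delta>'"
    and delta: "0 < \<delta>" "\<delta> < 1"
  shows "(\<forall>\<epsilon>>0. \<forall>n\<ge>1. \<forall>M::nat. g \<in> G_class n d \<longrightarrow>
            real n \<ge> 1 / real p * log 2 (2 * Cp * deriv_sup_norm p g / \<epsilon>) \<longrightarrow>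
            real M \<ge> 2 * Cest / (\<epsilon> * sqrt \<delta>) \<longrightarrow>
            measure \<Omega> {\<omega>\<in>space \<Omega>. \<bar>integral {0..1} g - ahat n M \<omega>\<bar> \<le> \<epsilon>} \<ge> 1 - \<delta>)
       \<and> (\<lambda>\<epsilon>::real. real (nat \<lceil>2 * Cest / (\<epsilon> * sqrt \<delta>)\<rceil> *
              gate_count (nat \<lceil>1 / real p * log 2 (2 * Cp * deriv_sup_norm p g / \<epsilon>)\<rceil>) d))
         \<in> O[at_right 0](\<lambda>\<epsilon>. (ln (1 / \<epsilon>) / real p) ^ d / \<epsilon>)"
proof -
  define N where "N = deriv_sup_norm p g"
  have p0: "real p > 0" using p_ge by simp
  have N0: "N \<ge> 0"
  proof (rule ccontr)
    assume "\<not> N \<ge> 0"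
    then have "Cp * 2 powr (- (real p * real (1::nat))) * N < 0"
      using Cp_pos by (simp add: mult_pos_neg)
    moreover have "\<bar>integral {0..1} g - Q 1\<bar> \<le> Cp * 2 powr (- (real p * real (1::nat))) * N"
      using quad_err N_def by auto
    ultimately show False by linarith
  qed
  have part1: "\<forall>\<epsilon>>0. \<forall>n\<ge>1. \<forall>M::nat. g \<in> G_class n d \<longrightarrow>
            real n \<ge> 1 / real p * log 2 (2 * Cp * deriv_sup_norm p g / \<epsilon>) \<longrightarrow>
            real M \<ge> 2 * Cest / (\<epsilon> * sqrt \<delta>) \<longrightarrow>
            measure \<Omega> {\<omega>\<in>space \<Omega>. \<bar>integral {0..1} g - ahat n M \<omega>\<bar> \<le> \<epsilon>} \<ge> 1 - \<delta>"
  proof (intro allI impI)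
    fix \<epsilon> :: real and n M :: nat
    assume e: "\<epsilon> > 0" and n: "n \<ge> 1" and "g \<in> G_class n d"
      and nlog: "real n \<ge> 1 / real p * log 2 (2 * Cp * deriv_sup_norm p g / \<epsilon>)"
      and Mge: "real M \<ge> 2 * Cest / (\<epsilon> * sqrt \<delta>)"
    have sd: "sqrt \<delta> > 0" using delta by simp
    have quad: "\<bar>integral {0..1} g - Q n\<bar> \<le> \<epsilon> / 2"
    proof (cases "N = 0")
      case True
      then show ?thesis using quad_err n e N_def by force
    next
      case False
      then have Np: "N > 0" using N0 by simp
      have X: "2 * Cp * N / \<epsilon> > 0" using Np Cp_pos e by simp
      have "log 2 (2 * Cp * N / \<epsilon>) \<le> real p * real n"
        using nlog p0 N_def by (simp add: field_simps)
      then have "2 * Cp * N / \<epsilon> \<le> 2 powr (real p * real n)"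
        using X by (simp add: log_le_iff)
      then have "Cp * N \<le> \<epsilon> / 2 * 2 powr (real p * real n)"
        using e by (simp add: field_simps)
      then have "Cp * 2 powr (- (real p * real n)) * N \<le> \<epsilon> / 2"
        by (simp add: powr_minus field_simps)
      then show ?thesis using quad_err n N_def by force
    qed
    have Mpos: "real M > 0"
      using Mge e sd Cest_pos by (smt (verit) divide_pos_pos mult_pos_pos)
    have "Cest / (real M * sqrt \<delta>) \<le> \<epsilon> / 2"
      using Mge Mpos sd e by (simp add: field_simps)
    have sub: "{\<omega>\<in>space \<Omega>. \<bar>ahat n M \<omega> - Q n\<bar> \<le> Cest / (real M * sqrt \<delta>)}
               \<subseteq> {\<omega>\<in>space \<Omega>. \<bar>integral {0..1} g - ahat n M \<omega>\<bar> \<le> \<epsilon>}"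
    proof (rule subsetI)
      fix \<omega> assume "\<omega> \<in> {\<omega>\<in>space \<Omega>. \<bar>ahat n M \<omega> - Q n\<bar> \<le> Cest / (real M * sqrt \<delta>)}"
      then have w: "\<omega> \<in> space \<Omega>" "\<bar>ahat n M \<omega> - Q n\<bar> \<le> Cest / (real M * sqrt \<delta>)"
        by auto
      then have "\<omega> \<in> space \<Omega>" "\<bar>ahat n M \<omega> - Q n\<bar> \<le> \<epsilon> / 2"
        using \<open>Cest / (real M * sqrt \<delta>) \<le> \<epsilon> / 2\<close> by linarith+
      then show "\<omega> \<in> {\<omega>\<in>space \<Omega>. \<bar>integral {0..1} g - ahat n M \<omega>\<bar> \<le> \<epsilon>}"
      proof -
        have "\<bar>integral {0..1} g - ahat n M \<omega>\<bar> \<le> \<epsilon>"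
          using quad \<open>\<bar>ahat n M \<omega> - Q n\<bar> \<le> \<epsilon> / 2\<close> by arith
        then show ?thesis using \<open>\<omega> \<in> space \<Omega>\<close> by simp
      qed
    qed
    interpret prob_space \<Omega> by (rule prob)
    have meas: "{\<omega>\<in>space \<Omega>. \<bar>integral {0..1} g - ahat n M \<omega>\<bar> \<le> \<epsilon>} \<in> sets \<Omega>"
    proof -
      have [measurable]: "ahat n M \<in> borel_measurable \<Omega>" using ahat_meas by blast
      show ?thesis by measurable
    qed
    have "1 - \<delta> \<le> measure \<Omega> {\<omega>\<in>space \<Omega>. \<bar>ahat n M \<omega> - Q n\<bar> \<le> Cest / (real M * sqrt \<delta>)}"
      using estimator n Mpos delta by auto
    also have "\<dots> \<le> measure \<Omega> {\<omega>\<in>space \<Omega>. \<bar>integral {0..1} g - ahat n M \<omega>\<bar> \<le> \<epsilon>}"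
      by (rule finite_measure_mono[OF sub meas])
    finally show "measure \<Omega> {\<omega>\<in>space \<Omega>. \<bar>integral {0..1} g - ahat n M \<omega>\<bar> \<le> \<epsilon>} \<ge> 1 - \<delta>" .
  qed
  define L where "L = (\<lambda>\<epsilon>::real. ln (1 / \<epsilon>))"
  define a where "a = \<bar>log 2 (2 * Cp * N)\<bar> / real p"
  define B where "B = 1 + 1 / (real p * ln 2)"
  define c where "c = 2 * Cest / sqrt \<delta>"
  have a0: "a \<ge> 0" unfolding a_def using p0 by simp
  have B0: "B > 0" unfolding B_def using p0 by (simp add: add_pos_pos)
  have c0: "c > 0" unfolding c_def using Cest_pos delta by simp
  have Kb: "1 / real p * log 2 (2 * Cp * N / \<epsilon>) \<le> a + L \<epsilon> / (real p * ln 2)"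
    if e: "0 < \<epsilon>" "\<epsilon> \<le> 1" for \<epsilon> :: real
  proof -
    have L0: "L \<epsilon> \<ge> 0" unfolding L_def using e by simp
    show ?thesis
    proof (cases "N = 0")
      case True
      have "L \<epsilon> / (real p * ln 2) \<ge> 0" using L0 p0 by simp
      then show ?thesis using True a0 by (simp add: log_def)
    next
      case False
      then have Np: "N > 0" using N0 by simp
      have "log 2 (2 * Cp * N / \<epsilon>) = log 2 (2 * Cp * N) + log 2 (1 / \<epsilon>)"
        using Np Cp_pos e by (simp add: log_mult[symmetric] log_divide)
      also have "log 2 (1 / \<epsilon>) = L \<epsilon> / ln 2" unfolding L_def log_def by simp
      finally have "1 / real p * log 2 (2 * Cp * N / \<epsilon>)
          = log 2 (2 * Cp * N) / real p + L \<epsilon> / (real p * ln 2)"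
        using p0 by (simp add: field_simps)
      also have "\<dots> \<le> a + L \<epsilon> / (real p * ln 2)"
        unfolding a_def using p0 by (simp add: divide_right_mono)
      finally show ?thesis .
    qed
  qed
  have Llim: "filterlim L at_top (at_right (0::real))"
    unfolding L_def by real_asymp
  have ev: "eventually (\<lambda>\<epsilon>. 0 < \<epsilon> \<and> \<epsilon> \<le> 1 \<and> L \<epsilon> \<ge> a + 2) (at_right (0::real))"
  proof -
    have "eventually (\<lambda>\<epsilon>. L \<epsilon> \<ge> a + 2) (at_right (0::real))"
      using Llim filterlim_at_top by blast
    moreover have "eventually (\<lambda>\<epsilon>::real. 0 < \<epsilon> \<and> \<epsilon> \<le> 1) (at_right 0)"
      by (simp add: eventually_at_right_field) (rule exI[of _ 1], auto)
    ultimately show ?thesis by eventually_elim auto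
  qed
  have part2: "(\<lambda>\<epsilon>::real. real (nat \<lceil>2 * Cest / (\<epsilon> * sqrt \<delta>)\<rceil> *
              gate_count (nat \<lceil>1 / real p * log 2 (2 * Cp * N / \<epsilon>)\<rceil>) d))
         \<in> O[at_right 0](\<lambda>\<epsilon>. (ln (1 / \<epsilon>) / real p) ^ d / \<epsilon>)"
  proof (rule bigoI[where c = "(c + 1) * real (d+1) * (B * real p) ^ d"])
    show "eventually (\<lambda>\<epsilon>. norm (real (nat \<lceil>2 * Cest / (\<epsilon> * sqrt \<delta>)\<rceil> *
              gate_count (nat \<lceil>1 / real p * log 2 (2 * Cp * N / \<epsilon>)\<rceil>) d))
          \<le> (c + 1) * real (d+1) * (B * real p) ^ d * norm ((ln (1 / \<epsilon>) / real p) ^ d / \<epsilon>))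
          (at_right 0)"
      using ev
    proof eventually_elim
      case (elim \<epsilon>)
      then have e: "0 < \<epsilon>" "\<epsilon> \<le> 1" and La: "L \<epsilon> \<ge> a + 2" by auto
      have L0: "L \<epsilon> \<ge> 0" using La a0 by simp
      define k where "k = nat \<lceil>1 / real p * log 2 (2 * Cp * N / \<epsilon>)\<rceil>"
      define m where "m = nat \<lceil>2 * Cest / (\<epsilon> * sqrt \<delta>)\<rceil>"
      have "real k \<le> max 0 (1 / real p * log 2 (2 * Cp * N / \<epsilon>)) + 1"
        unfolding k_def by linarith
      also have "\<dots> \<le> a + L \<epsilon> / (real p * ln 2) + 1"
        using Kb[OF e] a0 L0 p0 by (simp add: max_def)
      finally have "real k + 1 \<le> a + 2 + L \<epsilon> / (real p * ln 2)" by simp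
      also have "\<dots> \<le> L \<epsilon> + L \<epsilon> / (real p * ln 2)" using La by simp
      also have "\<dots> = B * L \<epsilon>" unfolding B_def by (simp add: field_simps)
      finally have kB: "real k + 1 \<le> B * L \<epsilon>" .
      have g: "real (gate_count k d) \<le> real (d+1) * (B * L \<epsilon>) ^ d"
        using gate_count_bound[of k d] kB
        by (smt (verit) mult_left_mono of_nat_0_le_iff power_mono)
      have "2 * Cest / (\<epsilon> * sqrt \<delta>) = c / \<epsilon>" unfolding c_def by simp
      moreover have cpos: "c / \<epsilon> > 0" using c0 e by simp
      moreover have "real (nat \<lceil>c / \<epsilon>\<rceil>) = real_of_int \<lceil>c / \<epsilon>\<rceil>"
        using cpos by (simp add: of_nat_nat)
      moreover have "real_of_int \<lceil>c / \<epsilon>\<rceil> \<le> c / \<epsilon> + 1" by linarith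
      ultimately have "real m \<le> c / \<epsilon> + 1" unfolding m_def by simp
      also have "\<dots> \<le> (c + 1) / \<epsilon>" using e by (simp add: field_simps)
      finally have mb: "real m \<le> (c + 1) / \<epsilon>" .
      have "real m * real (gate_count k d) \<le> (c + 1) / \<epsilon> * (real (d+1) * (B * L \<epsilon>) ^ d)"
        by (rule mult_mono[OF mb g]) (use c0 e in auto)
      also have "\<dots> = (c + 1) * real (d+1) * (B * real p) ^ d * ((L \<epsilon> / real p) ^ d / \<epsilon>)"
      proof -
        have pd: "real p ^ d \<noteq> 0" using p0 by simp
        have "B * real p * (L \<epsilon> / real p) = B * L \<epsilon>" using p0 by simp
        then have eq: "(B * L \<epsilon>) ^ d = (B * real p) ^ d * ((L \<epsilon> / real p) ^ d)"
          by (metis power_mult_distrib)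
        have gen: "\<And>x k y z e :: real. x / e * (k * (y * z)) = x * k * y * (z / e)"
          by (simp add: field_simps)
        show ?thesis unfolding eq by (rule gen)
      qed
      finally have "real m * real (gate_count k d)
          \<le> (c + 1) * real (d+1) * (B * real p) ^ d * ((L \<epsilon> / real p) ^ d / \<epsilon>)" .
      moreover have "norm ((ln (1 / \<epsilon>) / real p) ^ d / \<epsilon>) = (L \<epsilon> / real p) ^ d / \<epsilon>"
        using L0 p0 e unfolding L_def by simp
      ultimately show ?case unfolding k_def[symmetric] m_def[symmetric] by simp
    qed
  qed
  show ?thesis using part1 part2 unfolding N_def by simp
qed

end
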